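(* Let $X$ be a separable Banach space, $Y$ a closed subspace of $X$, $\xi: Y\to X$ the identical embedding, and $\Gamma$ a linear (not necessarily closed) subspace of $Y^{*}$. Then for every ordinal $\alpha$ we have $(\xi^{*})^{-1}(\Gamma_{(\alpha)}) = \big((\xi^{*})^{-1}\Gamma\big)_{(\alpha)}$, where $\xi^*: X^*\to Y^*$ is the adjoint (restriction) operator.
   Context: For a Banach space $Z$ and a subset $\Gamma\subset Z^*$, the weak$^*$-derived set $\Gamma_{(1)}$ is the set of all limits of weak$^*$-convergent sequences of elements of $\Gamma$. Weak$^*$-derived sets of arbitrary ordinal order are defined inductively by $\Gamma_{(0)}=\Gamma$ and $\Gamma_{(\alpha)}=\bigcup_{\beta<\alpha}(\Gamma_{(\beta)})_{(1)}$ for $\alpha\ge 1$. *)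

theory Defs
  imports "HOL-Analysis.Analysis"
begin

definition wstar_derived :: "((nat \<Rightarrow> 'f) \<Rightarrow> 'f \<Rightarrow> bool) \<Rightarrow> 'f set \<Rightarrow> 'f set" where
  "wstar_derived conv G = {x. \<exists>s. (\<forall>n. s n \<in> G) \<and> conv s x}"

definition iter_derived ::
  "((nat \<Rightarrow> 'f) \<Rightarrow> 'f \<Rightarrow> bool) \<Rightarrow> 'f set \<Rightarrow> 'o::wellorder \<Rightarrow> 'f set" where
  "iter_derived conv G = wfrec {(b, a). b < a}
     (\<lambda>rec a. if (\<forall>b. \<not> b < a) then G
              else (\<Union>b\<in>{b. b < a}. wstar_derived conv (rec b)))"

definition wstar_conv_X :: "(nat \<Rightarrow> ('a::real_normed_vector \<Rightarrow>\<^sub>L real)) \<Rightarrow> ('a \<Rightarrow>\<^sub>L real) \<Rightarrow> bool" where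
  "wstar_conv_X s f \<longleftrightarrow> (\<forall>x. (\<lambda>n. blinfun_apply (s n) x) \<longlonglongrightarrow> blinfun_apply f x)"

text \<open>The dual Y^* of a subspace Y of X: bounded linear functionals on Y,
represented canonically as functions on X vanishing outside Y.\<close>
definition dual_sub :: "'a::real_normed_vector set \<Rightarrow> ('a \<Rightarrow> real) set" where
  "dual_sub Y = {g. (\<forall>x\<in>Y. \<forall>y\<in>Y. g (x + y) = g x + g y)
                  \<and> (\<forall>c. \<forall>x\<in>Y. g (c *\<^sub>R x) = c * g x)
                  \<and> (\<exists>K. \<forall>x\<in>Y. \<bar>g x\<bar> \<le> K * norm x)
                  \<and> (\<forall>x. x \<notin> Y \<longrightarrow> g x = 0)}"

definition wstar_conv_Y :: "'a::real_normed_vector set \<Rightarrow> (nat \<Rightarrow> ('a \<Rightarrow> real)) \<Rightarrow> ('a \<Rightarrow> real) \<Rightarrow> bool" where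
  "wstar_conv_Y Y s g \<longleftrightarrow> g \<in> dual_sub Y \<and> (\<forall>y\<in>Y. (\<lambda>n. s n y) \<longlonglongrightarrow> g y)"

definition restr_adj :: "'a set \<Rightarrow> ('a::real_normed_vector \<Rightarrow>\<^sub>L real) \<Rightarrow> ('a \<Rightarrow> real)" where
  "restr_adj Y f = (\<lambda>y. if y \<in> Y then blinfun_apply f y else 0)"

definition lin_subspace_dual :: "'a::real_normed_vector set \<Rightarrow> ('a \<Rightarrow> real) set \<Rightarrow> bool" where
  "lin_subspace_dual Y \<Gamma> \<longleftrightarrow> \<Gamma> \<subseteq> dual_sub Y \<and> (\<lambda>_. 0) \<in> \<Gamma>
     \<and> (\<forall>g\<in>\<Gamma>. \<forall>h\<in>\<Gamma>. (\<lambda>x. g x + h x) \<in> \<Gamma>)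
     \<and> (\<forall>c. \<forall>g\<in>\<Gamma>. (\<lambda>x. c * g x) \<in> \<Gamma>)"

end

theory Submission
  imports Defs "HOL-Library.Diagonal_Subsequence"
begin

lemma iter_derived_unfold:
  "iter_derived conv G (a::'o::wellorder) = (if (\<forall>b. \<not> b < a) then G
      else (\<Union>b\<in>{b. b < a}. wstar_derived conv (iter_derived conv G b)))"
  unfolding iter_derived_def
  apply (subst wfrec[OF wellorder_class.wf])
  apply (simp add: cut_apply)
  done

lemma restr_in_dual:
  assumes "subspace Y"
  shows "restr_adj Y f \<in> dual_sub Y"
proof -
  have "\<forall>x\<in>Y. \<bar>blinfun_apply f x\<bar> \<le> norm f * norm x"
    by (metis norm_blinfun real_norm_def)
  then show ?thesis
    using assms unfolding dual_sub_def restr_adj_def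
    by (auto simp: subspace_add subspace_scale blinfun.add_right blinfun.scaleR_right)
qed

lemma dual_sub_props:
  assumes "g \<in> dual_sub Y" "subspace Y"
  shows "g 0 = 0" "\<And>x y. x \<in> Y \<Longrightarrow> y \<in> Y \<Longrightarrow> g (x - y) = g x - g y"
    "\<exists>K. \<forall>x\<in>Y. \<bar>g x\<bar> \<le> K * norm x"
    "\<And>x y. x \<in> Y \<Longrightarrow> y \<in> Y \<Longrightarrow> g (x + y) = g x + g y"
    "\<And>c x. x \<in> Y \<Longrightarrow> g (c *\<^sub>R x) = c * g x"
proof -
  have sc: "\<And>c x. x \<in> Y \<Longrightarrow> g (c *\<^sub>R x) = c * g x"
   and ad: "\<And>x y. x \<in> Y \<Longrightarrow> y \<in> Y \<Longrightarrow> g (x + y) = g x + g y"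
    using assms(1) by (auto simp: dual_sub_def)
  show "\<And>x y. x \<in> Y \<Longrightarrow> y \<in> Y \<Longrightarrow> g (x + y) = g x + g y" by (fact ad)
  show "\<And>c x. x \<in> Y \<Longrightarrow> g (c *\<^sub>R x) = c * g x" by (fact sc)
  show "g 0 = 0" using sc[of 0 0] assms(2) subspace_0 by fastforce
  show "\<exists>K. \<forall>x\<in>Y. \<bar>g x\<bar> \<le> K * norm x" using assms(1) by (auto simp: dual_sub_def)
  fix x y assume "x \<in> Y" "y \<in> Y"
  have "(-1) *\<^sub>R y \<in> Y" using assms(2) \<open>y \<in> Y\<close> by (rule subspace_scale)
  then have "g (x + (-1) *\<^sub>R y) = g x + g ((-1) *\<^sub>R y)" using ad \<open>x \<in> Y\<close> by blast
  also have "g ((-1) *\<^sub>R y) = (-1) * g y" using sc \<open>y \<in> Y\<close> by blast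
  finally show "g (x - y) = g x - g y" by simp
qed

lemma UBP:
  fixes Y :: "'a::banach set" and t :: "nat \<Rightarrow> 'a \<Rightarrow> real"
  assumes Y: "subspace Y" "closed Y"
    and td: "\<And>n. t n \<in> dual_sub Y"
    and pb: "\<And>y. y \<in> Y \<Longrightarrow> \<exists>M. \<forall>n. \<bar>t n y\<bar> \<le> M"
  shows "\<exists>K. \<forall>n. \<forall>y\<in>Y. \<bar>t n y\<bar> \<le> K * norm y"
proof -
  define F where "F m = {y\<in>Y. \<forall>n. \<bar>t n y\<bar> \<le> real m}" for m :: nat
  have clF: "closed (F m)" for m
    unfolding closed_sequential_limits
  proof (intro allI impI, elim conjE)
    fix x l assume x: "\<forall>k. x k \<in> F m" and l: "x \<longlonglongrightarrow> l"
    have xY: "x k \<in> Y" for k using x by (auto simp: F_def)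
    have lY: "l \<in> Y" using Y(2) closed_sequential_limits xY l by blast
    have "\<bar>t n l\<bar> \<le> real m" for n
    proof -
      obtain Kn where Kn: "\<And>y. y \<in> Y \<Longrightarrow> \<bar>t n y\<bar> \<le> Kn * norm y"
        using dual_sub_props(3)[OF td Y(1)] by blast
      have "(\<lambda>k. t n (x k)) \<longlonglongrightarrow> t n l"
      proof (rule tendsto_sandwich[of "\<lambda>k. t n l - \<bar>Kn\<bar> * norm (x k - l)" _ _ "\<lambda>k. t n l + \<bar>Kn\<bar> * norm (x k - l)"])
        have d: "\<bar>t n (x k) - t n l\<bar> \<le> \<bar>Kn\<bar> * norm (x k - l)" for k
        proof -
          have "\<bar>t n (x k) - t n l\<bar> = \<bar>t n (x k - l)\<bar>"
            using dual_sub_props(2)[OF td Y(1) xY lY] by simp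
          also have "\<dots> \<le> Kn * norm (x k - l)"
            using Kn subspace_diff[OF Y(1) xY lY] by blast
          also have "\<dots> \<le> \<bar>Kn\<bar> * norm (x k - l)" by (simp add: mult_right_mono)
          finally show ?thesis .
        qed
        have d: "t n l - \<bar>Kn\<bar> * norm (x k - l) \<le> t n (x k) \<and> t n (x k) \<le> t n l + \<bar>Kn\<bar> * norm (x k - l)" for k
          using d[of k] by linarith
        show "\<forall>\<^sub>F k in sequentially. t n l - \<bar>Kn\<bar> * norm (x k - l) \<le> t n (x k)"
          by (intro always_eventually allI) (use d in \<open>simp add: abs_le_iff\<close>)
        show "\<forall>\<^sub>F k in sequentially. t n (x k) \<le> t n l + \<bar>Kn\<bar> * norm (x k - l)"
          by (intro always_eventually allI) (use d in \<open>simp add: abs_le_iff\<close>)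
        have "(\<lambda>k. norm (x k - l)) \<longlonglongrightarrow> 0"
          using l by (simp add: LIM_zero_iff tendsto_norm_zero)
        then have "(\<lambda>k. t n l - \<bar>Kn\<bar> * norm (x k - l)) \<longlonglongrightarrow> t n l - \<bar>Kn\<bar> * 0"
          and "(\<lambda>k. t n l + \<bar>Kn\<bar> * norm (x k - l)) \<longlonglongrightarrow> t n l + \<bar>Kn\<bar> * 0"
          by (intro tendsto_diff tendsto_add tendsto_mult tendsto_const; assumption)+
        then show "(\<lambda>k. t n l - \<bar>Kn\<bar> * norm (x k - l)) \<longlonglongrightarrow> t n l"
          and "(\<lambda>k. t n l + \<bar>Kn\<bar> * norm (x k - l)) \<longlonglongrightarrow> t n l" by simp_all
      qed
      then have "(\<lambda>k. \<bar>t n (x k)\<bar>) \<longlonglongrightarrow> \<bar>t n l\<bar>" by (rule tendsto_rabs)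
      then show ?thesis
        by (rule LIMSEQ_le_const2) (use x in \<open>auto simp: F_def\<close>)
    qed
    then show "l \<in> F m" using lY by (simp add: F_def)
  qed
  have UF: "\<Union>(range F) = Y"
  proof
    show "\<Union>(range F) \<subseteq> Y" by (auto simp: F_def)
    show "Y \<subseteq> \<Union>(range F)"
    proof
      fix y assume "y \<in> Y"
      then obtain M where M: "\<And>n. \<bar>t n y\<bar> \<le> M" using pb by blast
      obtain m :: nat where "M \<le> real m" using real_arch_simple by blast
      then have "y \<in> F m" using M \<open>y \<in> Y\<close> by (auto simp: F_def intro: order_trans)
      then show "y \<in> \<Union>(range F)" by blast
    qed
  qed
  have cms: "completely_metrizable_space (top_of_set Y)"
    by (rule completely_metrizable_space_closedin[OF completely_metrizable_space_euclidean])
      (use Y(2) closed_closedin in blast)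
  have "\<exists>m. (top_of_set Y) interior_of (F m) \<noteq> {}"
  proof (rule ccontr)
    assume "\<not> ?thesis"
    then have "(top_of_set Y) interior_of \<Union>(range F) = {}"
      using Baire_category_alt[of "top_of_set Y" "range F"] cms clF
      by (auto simp: F_def intro!: closed_subset)
    moreover have "(top_of_set Y) interior_of Y = Y"
      using interior_of_topspace[of "top_of_set Y"] by simp
    ultimately show False using UF subspace_0[OF Y(1)] by simp
  qed
  then obtain m y0 where "y0 \<in> (top_of_set Y) interior_of (F m)" by blast
  then obtain U where U: "openin (top_of_set Y) U" "y0 \<in> U" "U \<subseteq> F m"
    by (auto simp: interior_of_def)
  then obtain V where V: "open V" "U = Y \<inter> V" by (auto simp: openin_open)
  then obtain r where r: "r > 0" "ball y0 r \<subseteq> V" using U(2) open_contains_ball by blast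
  have y0: "y0 \<in> Y" using U V by blast
  have small: "\<bar>t n z\<bar> \<le> 2 * real m" if "z \<in> Y" "norm z < r" for n z
  proof -
    have "y0 + z \<in> ball y0 r" using that by (simp add: dist_norm)
    then have "y0 + z \<in> F m"
      using r U V subspace_add[OF Y(1) y0 that(1)] by blast
    moreover have "y0 \<in> F m" using U by blast
    moreover have "t n (y0 + z) = t n y0 + t n z"
      using dual_sub_props(4)[OF td Y(1) y0 that(1)] .
    ultimately show ?thesis by (auto simp: F_def) (smt (verit))
  qed
  have "\<bar>t n y\<bar> \<le> (4 * real m / r) * norm y" if "y \<in> Y" for n y
  proof (cases "y = 0")
    case True then show ?thesis using dual_sub_props(1)[OF td Y(1)] by simp
  next
    case False
    define c where "c = r / (2 * norm y)"
    have c: "c > 0" using False r by (simp add: c_def)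
    have "norm (c *\<^sub>R y) = r / 2" using False c r by (simp add: c_def)
    then have "\<bar>t n (c *\<^sub>R y)\<bar> \<le> 2 * real m"
      using small[of "c *\<^sub>R y"] subspace_scale[OF Y(1) that] r by simp
    then have "c * \<bar>t n y\<bar> \<le> 2 * real m"
      using dual_sub_props(5)[OF td Y(1) that] c by (simp add: abs_mult)
    then have "\<bar>t n y\<bar> \<le> 2 * real m / c" using c by (simp add: field_simps)
    also have "\<dots> = (4 * real m / r) * norm y" using False r by (simp add: c_def field_simps)
    finally show ?thesis .
  qed
  then show ?thesis by blast
qed

definition hb_good :: "real \<Rightarrow> 'a::real_normed_vector set \<Rightarrow> ('a \<Rightarrow> real) \<Rightarrow> ('a \<times> real) set \<Rightarrow> bool" where
  "hb_good K Y g G \<longleftrightarrow> (\<forall>x a y b. (x, a) \<in> G \<longrightarrow> (y, b) \<in> G \<longrightarrow> (x + y, a + b) \<in> G)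
     \<and> (\<forall>c x a. (x, a) \<in> G \<longrightarrow> (c *\<^sub>R x, c * a) \<in> G)
     \<and> (\<forall>x a. (x, a) \<in> G \<longrightarrow> a \<le> K * norm x)
     \<and> (\<forall>y\<in>Y. (y, g y) \<in> G)"

lemma hb_addD: "hb_good K Y g G \<Longrightarrow> (x, a) \<in> G \<Longrightarrow> (y, b) \<in> G \<Longrightarrow> (x + y, a + b) \<in> G"
  unfolding hb_good_def by blast
lemma hb_scD: "hb_good K Y g G \<Longrightarrow> (x, a) \<in> G \<Longrightarrow> (c *\<^sub>R x, c * a) \<in> G"
  unfolding hb_good_def by blast
lemma hb_bdD: "hb_good K Y g G \<Longrightarrow> (x, a) \<in> G \<Longrightarrow> a \<le> K * norm x"
  unfolding hb_good_def by blast
lemma hb_YD: "hb_good K Y g G \<Longrightarrow> y \<in> Y \<Longrightarrow> (y, g y) \<in> G"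
  unfolding hb_good_def by blast

lemma hb_good_fun:
  assumes "hb_good K Y g G" "(x, a) \<in> G" "(x, b) \<in> G"
  shows "a = b"
proof -
  have add: "\<And>x a y b. (x, a) \<in> G \<Longrightarrow> (y, b) \<in> G \<Longrightarrow> (x + y, a + b) \<in> G"
   and sc: "\<And>c x a. (x, a) \<in> G \<Longrightarrow> (c *\<^sub>R x, c * a) \<in> G"
   and bd: "\<And>x a. (x, a) \<in> G \<Longrightarrow> a \<le> K * norm x"
    using assms(1) unfolding hb_good_def by blast+
  have "(x + (-1) *\<^sub>R x, a + (-1) * b) \<in> G" using add[OF assms(2) sc[OF assms(3)]] .
  then have "a - b \<le> 0" using bd by fastforce
  moreover have "(x + (-1) *\<^sub>R x, b + (-1) * a) \<in> G" using add[OF assms(3) sc[OF assms(2)]] .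
  then have "b - a \<le> 0" using bd by fastforce
  ultimately show ?thesis by simp
qed

lemma hb_good_abs:
  assumes "hb_good K Y g G" "(x, a) \<in> G"
  shows "\<bar>a\<bar> \<le> K * norm x"
proof -
  have "((-1) *\<^sub>R x, (-1) * a) \<in> G" using assms unfolding hb_good_def by blast
  then have "- a \<le> K * norm x" using assms(1) unfolding hb_good_def by fastforce
  moreover have "a \<le> K * norm x" using assms unfolding hb_good_def by blast
  ultimately show ?thesis by simp
qed

lemma hb_extend:
  assumes good: "hb_good K Y g G" and Yne: "Y \<noteq> {}" and K: "K \<ge> 0" and x0: "\<And>a. (x0, a) \<notin> G"
  shows "\<exists>G'. hb_good K Y g G' \<and> G \<subseteq> G' \<and> G' \<noteq> G"
proof -
  have add: "\<And>x a y b. (x, a) \<in> G \<Longrightarrow> (y, b) \<in> G \<Longrightarrow> (x + y, a + b) \<in> G"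
   and sc: "\<And>c x a. (x, a) \<in> G \<Longrightarrow> (c *\<^sub>R x, c * a) \<in> G"
   and bd: "\<And>x a. (x, a) \<in> G \<Longrightarrow> a \<le> K * norm x"
   and gY: "\<And>y. y \<in> Y \<Longrightarrow> (y, g y) \<in> G"
    using good unfolding hb_good_def by blast+
  obtain y1 where "y1 \<in> Y" using Yne by blast
  have z: "(0, 0) \<in> G" using sc[OF gY[OF \<open>y1 \<in> Y\<close>], of 0] by simp
  have key: "a - K * norm (x - x0) \<le> K * norm (y + x0) - b" if "(x, a) \<in> G" "(y, b) \<in> G" for x a y b
  proof -
    have "a + b \<le> K * norm (x + y)" using bd[OF add[OF that]] .
    also have "\<dots> \<le> K * (norm (x - x0) + norm (y + x0))"
    proof -
      have "norm (x + y) \<le> norm (x - x0) + norm (y + x0)"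
        using norm_triangle_ineq[of "x - x0" "y + x0"] by (simp add: algebra_simps)
      then show ?thesis using K by (simp add: mult_left_mono)
    qed
    finally show ?thesis by (simp add: algebra_simps)
  qed
  define S where "S = {a - K * norm (x - x0) | x a. (x, a) \<in> G}"
  have Sne: "S \<noteq> {}" using z by (auto simp: S_def)
  have Sbd: "s \<le> K * norm (y + x0) - b" if "s \<in> S" "(y, b) \<in> G" for s y b
    using that key by (auto simp: S_def)
  define t where "t = Sup S"
  have t1: "a - K * norm (x - x0) \<le> t" if "(x, a) \<in> G" for x a
    unfolding t_def
    by (rule cSup_upper) (use that Sbd[OF _ z] in \<open>auto simp: S_def bdd_above_def\<close>)
  have t2: "t \<le> K * norm (y + x0) - b" if "(y, b) \<in> G" for y b
    unfolding t_def by (rule cSup_least[OF Sne]) (use Sbd that in blast)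
  define G' where "G' = {(x + l *\<^sub>R x0, a + l * t) | x a l. (x, a) \<in> G}"
  have "hb_good K Y g G'"
    unfolding hb_good_def
  proof (intro conjI allI impI ballI)
    fix x a y b assume "(x, a) \<in> G'" "(y, b) \<in> G'"
    then obtain x1 a1 l1 x2 a2 l2 where "(x1, a1) \<in> G" "(x2, a2) \<in> G"
      "x = x1 + l1 *\<^sub>R x0" "a = a1 + l1 * t" "y = x2 + l2 *\<^sub>R x0" "b = a2 + l2 * t"
      unfolding G'_def by blast
    then have "(x + y, a + b) = ((x1 + x2) + (l1 + l2) *\<^sub>R x0, (a1 + a2) + (l1 + l2) * t)"
      "(x1 + x2, a1 + a2) \<in> G"
      by (simp_all add: add algebra_simps scaleR_add_left)
    then show "(x + y, a + b) \<in> G'"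
      unfolding G'_def by blast
  next
    fix c x a assume "(x, a) \<in> G'"
    then obtain x1 a1 l1 where "(x1, a1) \<in> G" "x = x1 + l1 *\<^sub>R x0" "a = a1 + l1 * t"
      by (auto simp: G'_def)
    moreover have "(c *\<^sub>R x1, c * a1) \<in> G" using sc \<open>(x1, a1) \<in> G\<close> by blast
    ultimately have "(c *\<^sub>R x, c * a) = (c *\<^sub>R x1 + (c * l1) *\<^sub>R x0, c * a1 + (c * l1) * t)"
      "(c *\<^sub>R x1, c * a1) \<in> G"
      by (simp_all add: algebra_simps scaleR_add_right)
    then show "(c *\<^sub>R x, c * a) \<in> G'"
      unfolding G'_def by blast
  next
    fix x a assume "(x, a) \<in> G'"
    then obtain x1 a1 l where xa: "(x1, a1) \<in> G" "x = x1 + l *\<^sub>R x0" "a = a1 + l * t"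
      by (auto simp: G'_def)
    consider "l = 0" | "l > 0" | "l < 0" by linarith
    then show "a \<le> K * norm x"
    proof cases
      case 1 then show ?thesis using xa bd by simp
    next
      case 2
      define v where "v = (1 / l) *\<^sub>R x1 + x0"
      have "((1 / l) *\<^sub>R x1, (1 / l) * a1) \<in> G" using sc xa(1) by blast
      from t2[OF this] have A: "t \<le> K * norm v - (1 / l) * a1" by (simp add: v_def)
      have B: "l *\<^sub>R v = x" using 2 xa by (simp add: v_def scaleR_add_right)
      have C: "K * norm x = l * (K * norm v)" using 2 B[symmetric] by simp
      have "l * t \<le> l * (K * norm v - (1 / l) * a1)" using A 2 by (simp add: mult_left_mono)
      also have "\<dots> = l * (K * norm v) - a1" using 2 by (simp add: right_diff_distrib)
      finally have D: "l * t \<le> l * (K * norm v) - a1" .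
      show ?thesis using C D xa(3) by linarith
    next
      case 3
      define m where "m = - l"
      have m: "m > 0" using 3 by (simp add: m_def)
      define v where "v = (1 / m) *\<^sub>R x1 - x0"
      have "((1 / m) *\<^sub>R x1, (1 / m) * a1) \<in> G" using sc xa(1) by blast
      from t1[OF this] have A: "(1 / m) * a1 - K * norm v \<le> t" by (simp add: v_def)
      have B: "m *\<^sub>R v = x" using m xa by (simp add: v_def scaleR_diff_right m_def)
      have C: "K * norm x = m * (K * norm v)" using m B[symmetric] by simp
      have "m * ((1 / m) * a1 - K * norm v) \<le> m * t" using A m by (simp add: mult_left_mono)
      moreover have "m * ((1 / m) * a1 - K * norm v) = a1 - m * (K * norm v)"
        using m by (simp add: right_diff_distrib)
      ultimately have D: "a1 - m * (K * norm v) \<le> m * t" by simp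
      have "l * t = - (m * t)" by (simp add: m_def)
      then show ?thesis using C D xa(3) by linarith
    qed
  next
    fix y assume "y \<in> Y"
    then show "(y, g y) \<in> G'"
      unfolding G'_def using gY by (intro CollectI exI[of _ y] exI[of _ "g y"] exI[of _ 0]) auto
  qed
  moreover have "G \<subseteq> G'"
  proof
    fix p assume p: "p \<in> G"
    obtain x a where xa: "p = (x, a)" by (cases p)
    show "p \<in> G'"
      unfolding G'_def using p xa by (intro CollectI exI[of _ x] exI[of _ a] exI[of _ 0]) auto
  qed
  moreover have "(x0, t) \<in> G'"
    unfolding G'_def using z by (intro CollectI exI[of _ 0] exI[of _ 0] exI[of _ 1]) auto
  then have "G' \<noteq> G" using x0 by blast
  ultimately show ?thesis by blast
qed

lemma HB:
  fixes Y :: "'a::real_normed_vector set" and g :: "'a \<Rightarrow> real"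
  assumes Y: "subspace Y"
    and ad: "\<And>x y. x \<in> Y \<Longrightarrow> y \<in> Y \<Longrightarrow> g (x + y) = g x + g y"
    and sc: "\<And>c x. x \<in> Y \<Longrightarrow> g (c *\<^sub>R x) = c * g x"
    and bd: "\<And>y. y \<in> Y \<Longrightarrow> \<bar>g y\<bar> \<le> K * norm y" and K: "K \<ge> 0"
  shows "\<exists>h. (\<forall>y\<in>Y. blinfun_apply h y = g y) \<and> (\<forall>x. \<bar>blinfun_apply h x\<bar> \<le> K * norm x)"
proof -
  define A where "A = {G. hb_good K Y g G}"
  define G0 where "G0 = {(y, g y) | y. y \<in> Y}"
  have G0: "G0 \<in> A"
    unfolding A_def hb_good_def G0_def
    using Y ad sc bd by (auto simp: subspace_add subspace_scale abs_le_iff)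
  have "\<forall>C\<in>chains A. \<exists>U\<in>A. \<forall>X\<in>C. X \<subseteq> U"
  proof
    fix C assume C: "C \<in> chains A"
    show "\<exists>U\<in>A. \<forall>X\<in>C. X \<subseteq> U"
    proof (cases "C = {}")
      case True then show ?thesis using G0 by blast
    next
      case False
      have CA: "C \<subseteq> A" and ch: "\<And>X Z. X \<in> C \<Longrightarrow> Z \<in> C \<Longrightarrow> X \<subseteq> Z \<or> Z \<subseteq> X"
        using C by (auto simp: chains_def chain_subset_def)
      have "hb_good K Y g (\<Union>C)"
        unfolding hb_good_def
      proof (intro conjI allI impI ballI)
        fix x a y b assume "(x, a) \<in> \<Union>C" "(y, b) \<in> \<Union>C"
        then obtain X Z where XZ: "X \<in> C" "Z \<in> C" "(x, a) \<in> X" "(y, b) \<in> Z" by blast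
        have gX: "hb_good K Y g X" and gZ: "hb_good K Y g Z" using XZ CA by (auto simp: A_def)
        show "(x + y, a + b) \<in> \<Union>C"
        proof (cases "X \<subseteq> Z")
          case True then show ?thesis using hb_addD[OF gZ, of x a y b] XZ by blast
        next
          case False then have "Z \<subseteq> X" using ch[OF XZ(1,2)] by blast
          then show ?thesis using hb_addD[OF gX, of x a y b] XZ by blast
        qed
      next
        fix c x a assume "(x, a) \<in> \<Union>C"
        then obtain X where "X \<in> C" "(x, a) \<in> X" by blast
        then show "(c *\<^sub>R x, c * a) \<in> \<Union>C"
          using CA hb_scD[of K Y g X x a c] by (auto simp: A_def)
      next
        fix x a assume "(x, a) \<in> \<Union>C"
        then obtain X where "X \<in> C" "(x, a) \<in> X" by blast
        then show "a \<le> K * norm x"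
          using CA hb_bdD[of K Y g X x a] by (auto simp: A_def)
      next
        fix y assume "y \<in> Y"
        obtain X where "X \<in> C" using False by blast
        then show "(y, g y) \<in> \<Union>C"
          using CA hb_YD[of K Y g X y] \<open>y \<in> Y\<close> by (auto simp: A_def)
      qed
      then show ?thesis unfolding A_def by blast
    qed
  qed
  from Zorn_Lemma2[OF this] obtain M where M: "M \<in> A" and max: "\<And>X. X \<in> A \<Longrightarrow> M \<subseteq> X \<Longrightarrow> X = M"
    by blast
  have good: "hb_good K Y g M" using M by (simp add: A_def)
  have Yne: "Y \<noteq> {}" using subspace_0[OF Y] by blast
  have tot: "\<exists>a. (x, a) \<in> M" for x
  proof (rule ccontr)
    assume "\<nexists>a. (x, a) \<in> M"
    then obtain G' where "hb_good K Y g G'" "M \<subseteq> G'" "G' \<noteq> M"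
      using hb_extend[OF good Yne K] by blast
    then show False using max[of G'] by (simp add: A_def)
  qed
  define h where "h x = (SOME a. (x, a) \<in> M)" for x
  have hM: "(x, h x) \<in> M" for x unfolding h_def using tot[of x] by (rule someI_ex)
  have hu: "h x = a" if "(x, a) \<in> M" for x a using hb_good_fun[OF good hM that] .
  have "bounded_linear h"
  proof (rule bounded_linear_intro)
    fix x y
    have "(x + y, h x + h y) \<in> M"
      using good hM[of x] hM[of y] unfolding hb_good_def by blast
    then show "h (x + y) = h x + h y" by (rule hu)
  next
    fix c x
    have "(c *\<^sub>R x, c * h x) \<in> M"
      using good hM[of x] unfolding hb_good_def by blast
    then show "h (c *\<^sub>R x) = c *\<^sub>R h x" using hu by simp
  next
    fix x show "norm (h x) \<le> norm x * K"
      using hb_good_abs[OF good hM[of x]] by (simp add: mult.commute)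
  qed
  moreover have "\<forall>y\<in>Y. h y = g y"
  proof
    fix y assume "y \<in> Y"
    then have "(y, g y) \<in> M" using good unfolding hb_good_def by blast
    then show "h y = g y" by (rule hu)
  qed
  moreover have "\<forall>x. \<bar>h x\<bar> \<le> K * norm x" using hb_good_abs[OF good hM] by blast
  ultimately show ?thesis
    by (intro exI[of _ "Blinfun h"]) (simp add: bounded_linear_Blinfun_apply)
qed

lemma COMPACT:
  fixes h :: "nat \<Rightarrow> 'a::real_normed_vector \<Rightarrow>\<^sub>L real"
  assumes sep: "separable_space (euclidean :: 'a topology)"
    and hb: "\<And>n x. \<bar>blinfun_apply (h n) x\<bar> \<le> K * norm x"
  shows "\<exists>r e. strict_mono r \<and> (\<forall>x. (\<lambda>k. blinfun_apply (h (r k)) x) \<longlonglongrightarrow> blinfun_apply e x)"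
proof -
  obtain C :: "'a set" where C: "countable C" "closure C = UNIV"
    using sep by (auto simp: separable_space_def)
  have "C \<noteq> {}" using C by auto
  define dd where "dd = from_nat_into C"
  have dd: "range dd = C" using C \<open>C \<noteq> {}\<close> by (simp add: dd_def range_from_nat_into)
  define P where "P i r \<longleftrightarrow> convergent (\<lambda>k. blinfun_apply (h (r k)) (dd i))" for i and r :: "nat \<Rightarrow> nat"
  interpret subseqs P
  proof
    fix i and s :: "nat \<Rightarrow> nat" assume "strict_mono s"
    have "bounded (range (\<lambda>k. blinfun_apply (h (s k)) (dd i)))"
      using hb by (auto simp: bounded_iff intro!: exI[of _ "K * norm (dd i)"])
    then obtain l r where "strict_mono r" "((\<lambda>k. blinfun_apply (h (s k)) (dd i)) \<circ> r) \<longlonglongrightarrow> l"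
      using bounded_imp_convergent_subsequence by blast
    then show "\<exists>r'. strict_mono r' \<and> P i (s \<circ> r')"
      by (auto simp: P_def convergent_def o_def)
  qed
  define R where "R = diagseq"
  have R: "strict_mono R" unfolding R_def by (rule subseq_diagseq)
  have convD: "convergent (\<lambda>k. blinfun_apply (h (R k)) (dd i))" for i
  proof -
    have "P i (diagseq \<circ> ((+) (Suc i)))"
    proof (rule diagseq_holds)
      fix r s n assume "strict_mono (r::nat\<Rightarrow>nat)" "P n s"
      then show "P n (s \<circ> r)"
        using convergent_subseq_convergent[of "\<lambda>k. blinfun_apply (h (s k)) (dd n)" r]
        by (simp add: P_def o_def)
    qed
    then obtain l where "(\<lambda>k. blinfun_apply (h (R (k + Suc i))) (dd i)) \<longlonglongrightarrow> l"
      by (auto simp: P_def convergent_def o_def R_def add.commute)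
    then show ?thesis using LIMSEQ_offset convergent_def by blast
  qed
  define K' where "K' = max K 0 + 1"
  have K': "K' > 0" unfolding K'_def by simp
  have hb': "\<bar>blinfun_apply (h n) x\<bar> \<le> K' * norm x" for n x
    using hb[of n x] unfolding K'_def
    by (smt (verit) max.cobounded1 mult_right_mono norm_ge_zero)
  have conv: "convergent (\<lambda>k. blinfun_apply (h (R k)) x)" for x
  proof -
    have "Cauchy (\<lambda>k. blinfun_apply (h (R k)) x)"
    proof (rule CauchyI)
      fix \<epsilon> :: real assume "\<epsilon> > 0"
      then have "\<epsilon> / (3 * K') > 0" using K' by simp
      then obtain d where "d \<in> C" and d: "dist d x < \<epsilon> / (3 * K')"
        using C(2) closure_approachable[of x C] by auto
      then obtain i where i: "dd i = d" using dd by auto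
      have "Cauchy (\<lambda>k. blinfun_apply (h (R k)) d)"
        using convD[of i] i Cauchy_convergent_iff by auto
      then obtain M where M: "\<And>m n. m \<ge> M \<Longrightarrow> n \<ge> M \<Longrightarrow>
          norm (blinfun_apply (h (R m)) d - blinfun_apply (h (R n)) d) < \<epsilon> / 3"
        using \<open>\<epsilon> > 0\<close> unfolding Cauchy_iff by (meson divide_pos_pos zero_less_numeral)
      have small: "\<bar>blinfun_apply (h n) x - blinfun_apply (h n) d\<bar> < \<epsilon> / 3" for n
      proof -
        have "\<bar>blinfun_apply (h n) x - blinfun_apply (h n) d\<bar> = \<bar>blinfun_apply (h n) (x - d)\<bar>"
          by (simp add: blinfun.diff_right)
        also have "\<dots> \<le> K' * norm (x - d)" by (rule hb')
        also have "\<dots> < K' * (\<epsilon> / (3 * K'))"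
          using d K' by (intro mult_strict_left_mono) (simp_all add: dist_norm norm_minus_commute)
        also have "\<dots> = \<epsilon> / 3" using K' by simp
        finally show ?thesis .
      qed
      show "\<exists>M. \<forall>m\<ge>M. \<forall>n\<ge>M. norm (blinfun_apply (h (R m)) x - blinfun_apply (h (R n)) x) < \<epsilon>"
      proof (intro exI allI impI)
        fix m n assume "m \<ge> M" "n \<ge> M"
        from M[OF this] small[of "R m"] small[of "R n"]
        show "norm (blinfun_apply (h (R m)) x - blinfun_apply (h (R n)) x) < \<epsilon>"
          by (simp add: abs_if split: if_splits)
      qed
    qed
    then show ?thesis using Cauchy_convergent_iff by blast
  qed
  define L where "L x = lim (\<lambda>k. blinfun_apply (h (R k)) x)" for x
  have L: "(\<lambda>k. blinfun_apply (h (R k)) x) \<longlonglongrightarrow> L x" for x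
    using conv[of x] by (simp add: L_def convergent_LIMSEQ_iff)
  have "bounded_linear L"
  proof (rule bounded_linear_intro)
    fix x y
    have "(\<lambda>k. blinfun_apply (h (R k)) (x + y)) \<longlonglongrightarrow> L x + L y"
      using tendsto_add[OF L[of x] L[of y]] by (simp add: blinfun.add_right)
    then show "L (x + y) = L x + L y" using L[of "x + y"] LIMSEQ_unique by blast
  next
    fix c x
    have "(\<lambda>k. blinfun_apply (h (R k)) (c *\<^sub>R x)) \<longlonglongrightarrow> c *\<^sub>R L x"
      using tendsto_scaleR[OF tendsto_const L[of x]] by (simp add: blinfun.scaleR_right)
    then show "L (c *\<^sub>R x) = c *\<^sub>R L x" using L[of "c *\<^sub>R x"] LIMSEQ_unique by blast
  next
    fix x
    have "(\<lambda>k. \<bar>blinfun_apply (h (R k)) x\<bar>) \<longlonglongrightarrow> \<bar>L x\<bar>"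
      using L by (rule tendsto_rabs)
    then have "\<bar>L x\<bar> \<le> K' * norm x"
      by (rule LIMSEQ_le_const2) (use hb' in auto)
    then show "norm (L x) \<le> norm x * K'" by (simp add: mult.commute)
  qed
  then show ?thesis
    using R L by (intro exI[of _ R] exI[of _ "Blinfun L"]) (simp add: bounded_linear_Blinfun_apply)
qed

lemma key:
  fixes Y :: "'a::banach set" and t :: "nat \<Rightarrow> 'a \<Rightarrow> real"
  assumes sep: "separable_space (euclidean :: 'a topology)"
    and Y: "subspace Y" "closed Y"
    and td: "\<And>n. t n \<in> dual_sub Y"
    and tc: "\<And>y. y \<in> Y \<Longrightarrow> (\<lambda>n. t n y) \<longlonglongrightarrow> blinfun_apply f y"
  shows "\<exists>s r. (\<forall>k. restr_adj Y (s k) = t (r k)) \<and> wstar_conv_X s f"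
proof -
  have "\<exists>M. \<forall>n. \<bar>t n y\<bar> \<le> M" if "y \<in> Y" for y
  proof -
    have "bounded (range (\<lambda>n. t n y))"
      using tc[OF that] convergent_imp_bounded by blast
    then show ?thesis by (auto simp: bounded_iff)
  qed
  then have "\<exists>K. \<forall>n. \<forall>y\<in>Y. \<bar>t n y\<bar> \<le> K * norm y"
    using UBP[of Y t] Y td by blast
  then obtain K0 where K0: "\<And>n y. y \<in> Y \<Longrightarrow> \<bar>t n y\<bar> \<le> K0 * norm y"
    by blast
  define K where "K = max K0 0 + norm f"
  have K: "K \<ge> 0" unfolding K_def by simp
  have "\<exists>e. (\<forall>y\<in>Y. blinfun_apply e y = t n y - blinfun_apply f y) \<and> (\<forall>x. \<bar>blinfun_apply e x\<bar> \<le> K * norm x)" for n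
  proof (rule HB[OF Y(1) _ _ _ K])
    fix x y assume "x \<in> Y" "y \<in> Y"
    then show "t n (x + y) - blinfun_apply f (x + y) = t n x - blinfun_apply f x + (t n y - blinfun_apply f y)"
      using td[of n] by (simp add: dual_sub_def blinfun.add_right)
  next
    fix c x assume "x \<in> Y"
    then show "t n (c *\<^sub>R x) - blinfun_apply f (c *\<^sub>R x) = c * (t n x - blinfun_apply f x)"
      using td[of n] by (simp add: dual_sub_def blinfun.scaleR_right algebra_simps)
  next
    fix y assume "y \<in> Y"
    have "\<bar>t n y - blinfun_apply f y\<bar> \<le> \<bar>t n y\<bar> + \<bar>blinfun_apply f y\<bar>" by simp
    also have "\<dots> \<le> max K0 0 * norm y + norm f * norm y"
      using K0[OF \<open>y \<in> Y\<close>, of n] norm_blinfun[of f y]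
      by (smt (verit) mult_right_mono norm_ge_zero real_norm_def max.cobounded1)
    finally show "\<bar>t n y - blinfun_apply f y\<bar> \<le> K * norm y" by (simp add: K_def algebra_simps)
  qed
  then obtain e where e1: "\<And>n y. y \<in> Y \<Longrightarrow> blinfun_apply (e n) y = t n y - blinfun_apply f y"
    and e2: "\<And>n x. \<bar>blinfun_apply (e n) x\<bar> \<le> K * norm x"
    by metis
  obtain r e0 where r: "strict_mono r" and e0: "\<And>x. (\<lambda>k. blinfun_apply (e (r k)) x) \<longlonglongrightarrow> blinfun_apply e0 x"
    using COMPACT[of e K] sep e2 by blast
  have e0Y: "blinfun_apply e0 y = 0" if "y \<in> Y" for y
  proof -
    have "(\<lambda>k. t (r k) y - blinfun_apply f y) \<longlonglongrightarrow> blinfun_apply f y - blinfun_apply f y"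
      using LIMSEQ_subseq_LIMSEQ[OF tc[OF that] r] by (intro tendsto_diff) (auto simp: o_def)
    moreover have "(\<lambda>k. t (r k) y - blinfun_apply f y) \<longlonglongrightarrow> blinfun_apply e0 y"
      using e0[of y] e1[OF that] by simp
    ultimately show ?thesis using LIMSEQ_unique by fastforce
  qed
  define s where "s k = f + e (r k) - e0" for k
  have "restr_adj Y (s k) = t (r k)" for k
  proof
    fix y show "restr_adj Y (s k) y = t (r k) y"
    proof (cases "y \<in> Y")
      case True then show ?thesis
        by (simp add: restr_adj_def s_def blinfun.add_left blinfun.diff_left e1 e0Y)
    next
      case False then show ?thesis
        using td[of "r k"] by (simp add: restr_adj_def dual_sub_def)
    qed
  qed
  moreover have "wstar_conv_X s f"
    unfolding wstar_conv_X_def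
  proof
    fix x
    have "(\<lambda>k. blinfun_apply f x + blinfun_apply (e (r k)) x - blinfun_apply e0 x) \<longlonglongrightarrow>
        blinfun_apply f x + blinfun_apply e0 x - blinfun_apply e0 x"
      by (intro tendsto_intros e0)
    then show "(\<lambda>n. blinfun_apply (s n) x) \<longlonglongrightarrow> blinfun_apply f x"
      by (simp add: s_def blinfun.add_left blinfun.diff_left)
  qed
  ultimately show ?thesis by blast
qed

theorem lemma1:
  fixes Y :: "'a::banach set" and \<Gamma> :: "('a \<Rightarrow> real) set" and \<alpha> :: "'o::wellorder"
  assumes "separable_space (euclidean :: 'a topology)"
    and "subspace Y" and "closed Y"
    and "lin_subspace_dual Y \<Gamma>"
  shows "{f. restr_adj Y f \<in> iter_derived (wstar_conv_Y Y) \<Gamma> \<alpha>}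
       = iter_derived wstar_conv_X {f. restr_adj Y f \<in> \<Gamma>} \<alpha>"
proof -
  have sub: "iter_derived (wstar_conv_Y Y) \<Gamma> a \<subseteq> dual_sub Y" for a :: 'o
    apply (subst iter_derived_unfold)
    using assms(4) by (auto simp: lin_subspace_dual_def wstar_derived_def wstar_conv_Y_def)
  have "\<forall>f. restr_adj Y f \<in> iter_derived (wstar_conv_Y Y) \<Gamma> a \<longleftrightarrow>
      f \<in> iter_derived wstar_conv_X {f. restr_adj Y f \<in> \<Gamma>} a" for a :: 'o
  proof (induction a rule: less_induct)
    case (less a)
    show ?case
    proof (cases "\<forall>b. \<not> b < a")
      case True
      then show ?thesis by (subst (1 2) iter_derived_unfold) simp
    next
      case False
      show ?thesis
      proof (intro allI iffI)
        fix f
        assume "restr_adj Y f \<in> iter_derived (wstar_conv_Y Y) \<Gamma> a"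
        then obtain b t where b: "b < a" and t: "\<And>n. t n \<in> iter_derived (wstar_conv_Y Y) \<Gamma> b"
          and conv: "wstar_conv_Y Y t (restr_adj Y f)"
          using False by (subst (asm) iter_derived_unfold) (auto simp: wstar_derived_def)
        have td: "t n \<in> dual_sub Y" for n using t sub by blast
        have "(\<lambda>n. t n y) \<longlonglongrightarrow> blinfun_apply f y" if "y \<in> Y" for y
          using conv that by (auto simp: wstar_conv_Y_def restr_adj_def)
        then obtain s r where sr: "\<And>k. restr_adj Y (s k) = t (r k)" and sc: "wstar_conv_X s f"
          using key[of Y t f] assms(1-3) td by blast
        have "s k \<in> iter_derived wstar_conv_X {f. restr_adj Y f \<in> \<Gamma>} b" for k
          using less.IH[OF b] t sr by metis
        then show "f \<in> iter_derived wstar_conv_X {f. restr_adj Y f \<in> \<Gamma>} a"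
          using False b sc by (subst iter_derived_unfold) (auto simp: wstar_derived_def)
      next
        fix f
        assume "f \<in> iter_derived wstar_conv_X {f. restr_adj Y f \<in> \<Gamma>} a"
        then obtain b s where b: "b < a" and s: "\<And>n. s n \<in> iter_derived wstar_conv_X {f. restr_adj Y f \<in> \<Gamma>} b"
          and conv: "wstar_conv_X s f"
          using False by (subst (asm) iter_derived_unfold) (auto simp: wstar_derived_def)
        have "restr_adj Y (s n) \<in> iter_derived (wstar_conv_Y Y) \<Gamma> b" for n
          using less.IH[OF b] s by blast
        moreover have "wstar_conv_Y Y (\<lambda>n. restr_adj Y (s n)) (restr_adj Y f)"
          using conv restr_in_dual[OF assms(2)]
          by (auto simp: wstar_conv_Y_def wstar_conv_X_def restr_adj_def)
        ultimately show "restr_adj Y f \<in> iter_derived (wstar_conv_Y Y) \<Gamma> a"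
          using False b by (subst iter_derived_unfold)
            (auto simp: wstar_derived_def intro!: exI[of _ b] exI[of _ "\<lambda>n. restr_adj Y (s n)"])
      qed
    qed
  qed
  then show ?thesis by blast
qed

end
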